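(* Let $N_{v_1},\dots,N_{v_k}$ be positive integers and $N_u$ a nonnegative integer, and let $N_u^1,\dots,N_u^k$ be computed by the following procedure: set $\Delta\gets0$; for $i=1,\dots,k$, let $x=\frac{N_{v_i}}{\sum_{j=1}^kN_{v_j}}\cdot N_u$; if $\Delta\ge x-\lfloor x\rfloor$, set $N_u^i\gets\lfloor x\rfloor$ and $\Delta\gets\Delta-(x-\lfloor x\rfloor)$; otherwise set $N_u^i\gets\lfloor x\rfloor+1$ and $\Delta\gets\Delta+1-(x-\lfloor x\rfloor)$. Then: (1) for every $i\in\{1,\dots,k\}$, $\sum_{j=1}^iN_u^j-1\le\frac{\sum_{j=1}^iN_{v_j}}{\sum_{j=1}^kN_{v_j}}\cdot N_u\le\sum_{j=1}^iN_u^j$; (2) for all $i_1,i_2\in\{1,\dots,k\}$ with $i_1<i_2$, $\sum_{j=i_1}^{i_2}N_u^j\le\frac{\sum_{j=i_1}^{i_2}N_{v_j}}{\sum_{j=1}^kN_{v_j}}\cdot N_u+1$; (3) $\sum_{j=1}^kN_u^j\ge N_u$. *)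

theory Defs
  imports Complex_Main
begin

definition alloc_x :: "(nat \<Rightarrow> nat) \<Rightarrow> nat \<Rightarrow> nat \<Rightarrow> nat \<Rightarrow> real" where
  "alloc_x Nv k Nu i = real (Nv i) / real (\<Sum>j=1..k. Nv j) * real Nu"

text \<open>Value of Delta after processing items 1..i (Delta = 0 initially).\<close>
fun alloc_delta :: "(nat \<Rightarrow> nat) \<Rightarrow> nat \<Rightarrow> nat \<Rightarrow> nat \<Rightarrow> real" where
  "alloc_delta Nv k Nu 0 = 0"
| "alloc_delta Nv k Nu (Suc i) =
     (let x = alloc_x Nv k Nu (Suc i); d = alloc_delta Nv k Nu i in
      if d \<ge> x - of_int \<lfloor>x\<rfloor> then d - (x - of_int \<lfloor>x\<rfloor>)
      else d + 1 - (x - of_int \<lfloor>x\<rfloor>))"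

definition alloc_N :: "(nat \<Rightarrow> nat) \<Rightarrow> nat \<Rightarrow> nat \<Rightarrow> nat \<Rightarrow> int" where
  "alloc_N Nv k Nu i =
     (let x = alloc_x Nv k Nu i; d = alloc_delta Nv k Nu (i - 1) in
      if d \<ge> x - of_int \<lfloor>x\<rfloor> then \<lfloor>x\<rfloor> else \<lfloor>x\<rfloor> + 1)"

end

theory Submission
  imports Defs
begin

lemma delta_inv:
  "alloc_delta Nv k Nu i = real_of_int (\<Sum>j=1..i. alloc_N Nv k Nu j) - (\<Sum>j=1..i. alloc_x Nv k Nu j)
   \<and> 0 \<le> alloc_delta Nv k Nu i \<and> alloc_delta Nv k Nu i < 1"
proof (induction i)
  case 0
  then show ?case by simp
next
  case (Suc i)
  define x where "x = alloc_x Nv k Nu (Suc i)"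
  define d where "d = alloc_delta Nv k Nu i"
  have f: "0 \<le> x - of_int \<lfloor>x\<rfloor>" "x - of_int \<lfloor>x\<rfloor> < 1"
    by linarith+
  have N: "alloc_N Nv k Nu (Suc i) = (if d \<ge> x - of_int \<lfloor>x\<rfloor> then \<lfloor>x\<rfloor> else \<lfloor>x\<rfloor> + 1)"
    unfolding alloc_N_def x_def d_def by (simp add: Let_def)
  have D: "alloc_delta Nv k Nu (Suc i) = (if d \<ge> x - of_int \<lfloor>x\<rfloor> then d - (x - of_int \<lfloor>x\<rfloor>)
      else d + 1 - (x - of_int \<lfloor>x\<rfloor>))"
    unfolding x_def d_def by (simp add: Let_def)
  have S1: "(\<Sum>j=1..Suc i. alloc_N Nv k Nu j) = (\<Sum>j=1..i. alloc_N Nv k Nu j) + alloc_N Nv k Nu (Suc i)"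
    by simp
  have S1': "real_of_int (\<Sum>j=1..Suc i. alloc_N Nv k Nu j) = real_of_int (\<Sum>j=1..i. alloc_N Nv k Nu j) + real_of_int (alloc_N Nv k Nu (Suc i))"
    by (simp only: S1 of_int_add)
  have S2: "(\<Sum>j=1..Suc i. alloc_x Nv k Nu j) = (\<Sum>j=1..i. alloc_x Nv k Nu j) + x"
    by (simp add: x_def)
  have IH: "d = real_of_int (\<Sum>j=1..i. alloc_N Nv k Nu j) - (\<Sum>j=1..i. alloc_x Nv k Nu j)" "0 \<le> d" "d < 1"
    using Suc.IH unfolding d_def by auto
  show ?case
  proof (cases "d \<ge> x - of_int \<lfloor>x\<rfloor>")
    case True
    then have ND: "alloc_N Nv k Nu (Suc i) = \<lfloor>x\<rfloor>" "alloc_delta Nv k Nu (Suc i) = d - (x - of_int \<lfloor>x\<rfloor>)"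
      using N D by simp_all
    then have "real_of_int (alloc_N Nv k Nu (Suc i)) = real_of_int (\<lfloor>x\<rfloor>)" by simp
    then show ?thesis using IH f S1' S2 ND(2) True by linarith
  next
    case False
    then have ND: "alloc_N Nv k Nu (Suc i) = \<lfloor>x\<rfloor> + 1" "alloc_delta Nv k Nu (Suc i) = d + 1 - (x - of_int \<lfloor>x\<rfloor>)"
      using N D by simp_all
    then have "real_of_int (alloc_N Nv k Nu (Suc i)) = real_of_int (\<lfloor>x\<rfloor> + 1)" by simp
    then show ?thesis using IH f S1' S2 ND(2) False by linarith
  qed
qed

lemma sum_split1:
  fixes f :: "nat \<Rightarrow> 'a::comm_monoid_add"
  assumes "a \<le> b"
  shows "sum f {1..b} = sum f {1..a} + sum f {Suc a..b}"
proof -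
  have "{1..b} = {1..a} \<union> {Suc a..b}" using assms by auto
  moreover have "{1..a} \<inter> {Suc a..b} = {}" by auto
  ultimately show ?thesis by (simp add: sum.union_disjoint)
qed

lemma sumx: "(\<Sum>j=1..i. alloc_x Nv k Nu j) = real (\<Sum>j=1..i. Nv j) / real (\<Sum>j=1..k. Nv j) * real Nu"
  unfolding alloc_x_def by (simp add: sum_distrib_right sum_divide_distrib)

theorem lemma9:
  fixes Nv :: "nat \<Rightarrow> nat" and k Nu :: nat
  assumes "k \<ge> 1"
    and "\<And>i. i \<in> {1..k} \<Longrightarrow> Nv i > 0"
  shows "(\<forall>i\<in>{1..k}.
            real_of_int (\<Sum>j=1..i. alloc_N Nv k Nu j) - 1
              \<le> real (\<Sum>j=1..i. Nv j) / real (\<Sum>j=1..k. Nv j) * real Nu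
          \<and> real (\<Sum>j=1..i. Nv j) / real (\<Sum>j=1..k. Nv j) * real Nu
              \<le> real_of_int (\<Sum>j=1..i. alloc_N Nv k Nu j))
       \<and> (\<forall>i1\<in>{1..k}. \<forall>i2\<in>{1..k}. i1 < i2 \<longrightarrow>
            real_of_int (\<Sum>j=i1..i2. alloc_N Nv k Nu j)
              \<le> real (\<Sum>j=i1..i2. Nv j) / real (\<Sum>j=1..k. Nv j) * real Nu + 1)
       \<and> (\<Sum>j=1..k. alloc_N Nv k Nu j) \<ge> int Nu"
proof (intro conjI ballI impI)
  fix i
  show "real_of_int (\<Sum>j=1..i. alloc_N Nv k Nu j) - 1
              \<le> real (\<Sum>j=1..i. Nv j) / real (\<Sum>j=1..k. Nv j) * real Nu"
    "real (\<Sum>j=1..i. Nv j) / real (\<Sum>j=1..k. Nv j) * real Nu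
              \<le> real_of_int (\<Sum>j=1..i. alloc_N Nv k Nu j)"
    using delta_inv[of Nv k Nu i] unfolding sumx by linarith+
next
  fix i1 i2 assume i: "i1 \<in> {1..k}" "i2 \<in> {1..k}" "i1 < i2"
  then have le: "i1 - 1 \<le> i2" and s: "Suc (i1 - 1) = i1" by auto
  have A: "(\<Sum>j=1..i2. alloc_N Nv k Nu j) = (\<Sum>j=1..i1-1. alloc_N Nv k Nu j) + (\<Sum>j=i1..i2. alloc_N Nv k Nu j)"
    using sum_split1[OF le] s by metis
  have B: "(\<Sum>j=1..i2. Nv j) = (\<Sum>j=1..i1-1. Nv j) + (\<Sum>j=i1..i2. Nv j)"
    using sum_split1[OF le] s by metis
  have B': "real (\<Sum>j=i1..i2. Nv j) / real (\<Sum>j=1..k. Nv j) * real Nu =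
     real (\<Sum>j=1..i2. Nv j) / real (\<Sum>j=1..k. Nv j) * real Nu - real (\<Sum>j=1..i1-1. Nv j) / real (\<Sum>j=1..k. Nv j) * real Nu"
    unfolding B by (simp add: add_divide_distrib distrib_right)
  show "real_of_int (\<Sum>j=i1..i2. alloc_N Nv k Nu j)
              \<le> real (\<Sum>j=i1..i2. Nv j) / real (\<Sum>j=1..k. Nv j) * real Nu + 1"
    using delta_inv[of Nv k Nu i2] delta_inv[of Nv k Nu "i1-1"] unfolding B' sumx
    using A by (simp only: of_int_add) linarith
next
  have pos: "0 < (\<Sum>j=1..k. Nv j)"
    using assms by (metis atLeastAtMost_iff finite_atLeastAtMost le_refl sum_pos2 zero_le)
  show "(\<Sum>j=1..k. alloc_N Nv k Nu j) \<ge> int Nu"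
  proof -
    have "real_of_int (\<Sum>j=1..k. alloc_N Nv k Nu j) \<ge> real Nu"
    proof -
      have "real (\<Sum>j=1..k. Nv j) / real (\<Sum>j=1..k. Nv j) * real Nu = real Nu"
        proof -
          have "real (\<Sum>j=1..k. Nv j) \<noteq> 0" using pos by linarith
          then show ?thesis by simp
        qed
      then show ?thesis using delta_inv[of Nv k Nu k] unfolding sumx by linarith
    qed
    then show ?thesis by linarith
  qed
qed

end
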